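(* For $s,w>0$ and positive integer $\eta\leq\frac{n}{2}$, there exists an interacting-electronic Hamiltonian $H=T+V=\sum_{j,k}\tau_{j,k}A_j^\dagger A_k+\sum_{l,m}\nu_{l,m}N_lN_m$ with $n$ spin orbitals such that $\|\tau\|=s$, $\|\nu\|_{\max}=w$, \begin{equation} \big\Vert\underbrace{[T,\ldots[T}_{p},V]]\big\Vert_{\eta}=\Omega\left(s^p w\eta\right),\qquad \big\Vert\underbrace{[V,\ldots[V}_{p},T]]\big\Vert_{\eta}=\Omega\left(\left(w\eta\right)^{p} s/n\right). \end{equation} In addition, for $u,w>0$ and positive integer $d\leq \eta\leq\frac{n}{2}$, there exists a $d$-sparse interacting-electronic Hamiltonian $H=T+V=\sum_{j,k}\tau_{j,k}A_j^\dagger A_k+\sum_{l,m}\nu_{l,m}N_lN_m$ with $n$ spin orbitals such that $\|\tau\|_{\max}=u$, $\|\nu\|_{\max}=w$, \begin{equation} \big\Vert\underbrace{[T,\ldots[T}_{p},V]]\big\Vert_{\eta}=\Omega\left(\left(ud\right)^p wd\right),\qquad \big\Vert\underbrace{[V,\ldots[V}_{p},T]]\big\Vert_{\eta}=\Omega\left(\left(wd\right)^p u\right). \end{equation}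
   Context: $A_j^\dagger$, $A_k$ are fermionic creation and annihilation operators on $n$ spin orbitals (modes), $N_l=A_l^\dagger A_l$ are occupation-number operators, and $\tau,\nu$ are $n\times n$ coefficient matrices. $\|\cdot\|$ is the spectral norm and $\|\cdot\|_{\max}$ the largest matrix element in absolute value. The interactions are called $d$-sparse if each row and column of $\tau$ and $\nu$ has at most $d$ nonzero entries. For a number-preserving operator $X$ (one commuting with $N=\sum_j N_j$), the fermionic $\eta$-seminorm is $\|X\|_\eta=\max_{|\psi_\eta\rangle,|\phi_\eta\rangle}|\langle\phi_\eta|X|\psi_\eta\rangle|$, the maximum over normalized states with exactly $\eta$ electrons. $p$ is a positive integer (the number of nested commutator layers). *)

theory Defs
  imports "HOL-Analysis.Analysis"
begin

text \<open>Fock space on n spin orbitals (modes 0..n-1): orthonormal basis |S> indexed by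
  occupied sets S \<subseteq> {..<n}. Operators are represented by their matrix entries
  X S U = <S|X|U>. Jordan-Wigner sign convention: modes ordered by index.\<close>

type_synonym fop = "nat set \<Rightarrow> nat set \<Rightarrow> complex"

definition opmul :: "nat \<Rightarrow> fop \<Rightarrow> fop \<Rightarrow> fop" where
  "opmul n X Y = (\<lambda>S U. \<Sum>R\<in>Pow {..<n}. X S R * Y R U)"

definition comm :: "nat \<Rightarrow> fop \<Rightarrow> fop \<Rightarrow> fop" where
  "comm n X Y = (\<lambda>S U. opmul n X Y S U - opmul n Y X S U)"

fun nested_comm :: "nat \<Rightarrow> nat \<Rightarrow> fop \<Rightarrow> fop \<Rightarrow> fop" where
  "nested_comm n 0 X Y = Y"
| "nested_comm n (Suc p) X Y = comm n X (nested_comm n p X Y)"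

definition cre :: "nat \<Rightarrow> nat \<Rightarrow> fop" where
  "cre n j = (\<lambda>S U. if j < n \<and> U \<subseteq> {..<n} \<and> j \<notin> U \<and> S = insert j U
                     then (-1) ^ card {i\<in>U. i < j} else 0)"

definition ann :: "nat \<Rightarrow> nat \<Rightarrow> fop" where
  "ann n k = (\<lambda>S U. if k < n \<and> U \<subseteq> {..<n} \<and> k \<in> U \<and> S = U - {k}
                     then (-1) ^ card {i\<in>U. i < k} else 0)"

definition numop :: "nat \<Rightarrow> nat \<Rightarrow> fop" where
  "numop n l = opmul n (cre n l) (ann n l)"

definition kinetic :: "nat \<Rightarrow> (nat \<Rightarrow> nat \<Rightarrow> complex) \<Rightarrow> fop" where
  "kinetic n tau = (\<lambda>S U. \<Sum>j<n. \<Sum>k<n. tau j k * opmul n (cre n j) (ann n k) S U)"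

definition potential :: "nat \<Rightarrow> (nat \<Rightarrow> nat \<Rightarrow> complex) \<Rightarrow> fop" where
  "potential n nu = (\<lambda>S U. \<Sum>l<n. \<Sum>m<n. nu l m * opmul n (numop n l) (numop n m) S U)"

definition eta_states :: "nat \<Rightarrow> nat \<Rightarrow> nat set set" where
  "eta_states n eta = {S \<in> Pow {..<n}. card S = eta}"

definition eta_norm :: "nat \<Rightarrow> nat \<Rightarrow> fop \<Rightarrow> real" where
  "eta_norm n eta X = Sup {cmod (\<Sum>S\<in>eta_states n eta. \<Sum>U\<in>eta_states n eta.
        cnj (phi S) * X S U * psi U) | phi psi.
        (\<Sum>S\<in>eta_states n eta. (cmod (phi S))\<^sup>2) = 1 \<and>
        (\<Sum>U\<in>eta_states n eta. (cmod (psi U))\<^sup>2) = 1}"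

definition spec_norm :: "nat \<Rightarrow> (nat \<Rightarrow> nat \<Rightarrow> complex) \<Rightarrow> real" where
  "spec_norm n A = Sup {sqrt (\<Sum>j<n. (cmod (\<Sum>k<n. A j k * y k))\<^sup>2) | y.
        (\<Sum>k<n. (cmod (y k))\<^sup>2) = 1}"

definition max_norm :: "nat \<Rightarrow> (nat \<Rightarrow> nat \<Rightarrow> complex) \<Rightarrow> real" where
  "max_norm n A = Max ((\<lambda>(j, k). cmod (A j k)) ` ({..<n} \<times> {..<n}))"

definition hermitian_mat :: "nat \<Rightarrow> (nat \<Rightarrow> nat \<Rightarrow> complex) \<Rightarrow> bool" where
  "hermitian_mat n A \<longleftrightarrow> (\<forall>j<n. \<forall>k<n. A k j = cnj (A j k))"

definition sparse_mat :: "nat \<Rightarrow> nat \<Rightarrow> (nat \<Rightarrow> nat \<Rightarrow> complex) \<Rightarrow> bool" where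
  "sparse_mat n d A \<longleftrightarrow> (\<forall>j<n. card {k. k < n \<and> A j k \<noteq> 0} \<le> d) \<and>
                         (\<forall>k<n. card {j. j < n \<and> A j k \<noteq> 0} \<le> d)"

end

theory Submission
  imports Defs
begin


lemma sum_single:
  assumes "finite A" "\<And>x. x \<in> A \<Longrightarrow> x \<noteq> a \<Longrightarrow> f x = 0"
  shows "sum f A = (if a \<in> A then f a else 0)"
proof (cases "a \<in> A")
  case True
  then have "sum f A = f a + sum f (A - {a})" using assms(1) by (simp add: sum.remove)
  also have "sum f (A - {a}) = 0" using assms(2) by (intro sum.neutral) auto
  finally show ?thesis using True by simp
next
  case False
  then show ?thesis using assms by (auto intro!: sum.neutral)
qed

lemma crean:
  "opmul n (cre n j) (ann n k) S U =
    (if j<n \<and> k<n \<and> U \<subseteq> {..<n} \<and> k\<in>U \<and> j \<notin> U-{k} \<and> S = insert j (U-{k})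
     then (-1)^(card{i\<in>U. i<k} + card{i\<in>U-{k}. i<j}) else 0)"
proof -
  have "opmul n (cre n j) (ann n k) S U = (\<Sum>R\<in>Pow {..<n}. cre n j S R * ann n k R U)"
    by (simp add: opmul_def)
  also have "\<dots> = (if U - {k} \<in> Pow {..<n} then cre n j S (U-{k}) * ann n k (U-{k}) U else 0)"
    by (rule sum_single) (auto simp: ann_def)
  also have "\<dots> = (if j<n \<and> k<n \<and> U \<subseteq> {..<n} \<and> k\<in>U \<and> j \<notin> U-{k} \<and> S = insert j (U-{k})
     then (-1)^(card{i\<in>U. i<k} + card{i\<in>U-{k}. i<j}) else 0)"
    by (auto simp: cre_def ann_def power_add)
  finally show ?thesis .
qed

lemma numop_eq:
  "numop n l S U = (if l<n \<and> U \<subseteq> {..<n} \<and> l\<in>U \<and> S = U then 1 else 0)"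
proof -
  have "numop n l S U = (if l<n \<and> l<n \<and> U \<subseteq> {..<n} \<and> l\<in>U \<and> l \<notin> U-{l} \<and> S = insert l (U-{l})
     then (-1)^(card{i\<in>U. i<l} + card{i\<in>U-{l}. i<l}) else 0)"
    unfolding numop_def by (rule crean)
  moreover have "{i\<in>U-{l}. i<l} = {i\<in>U. i<l}" by auto
  moreover have "l \<in> U \<Longrightarrow> insert l (U - {l}) = U" by auto
  ultimately show ?thesis by (auto simp: power_add[symmetric])
qed

lemma nn_eq:
  "opmul n (numop n l) (numop n q) S U = (if l<n \<and> q<n \<and> U \<subseteq> {..<n} \<and> l\<in>U \<and> q\<in>U \<and> S = U then 1 else 0)"
proof -
  have "opmul n (numop n l) (numop n q) S U = (\<Sum>R\<in>Pow {..<n}. numop n l S R * numop n q R U)"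
    by (simp add: opmul_def)
  also have "\<dots> = (if U \<in> Pow {..<n} then numop n l S U * numop n q U U else 0)"
    by (rule sum_single) (auto simp: numop_eq)
  also have "\<dots> = (if l<n \<and> q<n \<and> U \<subseteq> {..<n} \<and> l\<in>U \<and> q\<in>U \<and> S = U then 1 else 0)"
    by (auto simp: numop_eq)
  finally show ?thesis .
qed

lemma potential_eq:
  "potential n nu S U = (if S = U \<and> U \<subseteq> {..<n} then (\<Sum>l\<in>U. \<Sum>q\<in>U. nu l q) else 0)"
proof (cases "S = U \<and> U \<subseteq> {..<n}")
  case True
  have "potential n nu S U = (\<Sum>l<n. if l \<in> U then (\<Sum>q<n. if q \<in> U then nu l q else 0) else 0)"
    unfolding potential_def using True by (intro sum.cong refl) (auto simp: nn_eq intro!: sum.cong)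
  also have "\<dots> = (\<Sum>l\<in>{..<n} \<inter> U. \<Sum>q\<in>{..<n} \<inter> U. nu l q)"
    by (simp add: sum.inter_restrict)
  also have "{..<n} \<inter> U = U" using True by auto
  finally show ?thesis using True by simp
next
  case False
  then show ?thesis unfolding potential_def by (auto simp: nn_eq intro!: sum.neutral)
qed

definition Cs :: "nat \<Rightarrow> nat \<Rightarrow> nat set" where "Cs m eta = {2*m..<2*m+eta-1}"
definition st :: "nat \<Rightarrow> nat \<Rightarrow> nat \<Rightarrow> nat set" where "st m eta j = insert j (Cs m eta)"
definition sect :: "nat \<Rightarrow> nat \<Rightarrow> nat set set" where "sect m eta = st m eta ` {..<2*m}"
definition blk :: "nat \<Rightarrow> nat \<Rightarrow> fop \<Rightarrow> bool" where
  "blk m eta X \<longleftrightarrow> (\<forall>S U. (S \<in> sect m eta) \<noteq> (U \<in> sect m eta) \<longrightarrow> X S U = 0)"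

definition rmul :: "nat \<Rightarrow> (nat \<Rightarrow> nat \<Rightarrow> complex) \<Rightarrow> (nat \<Rightarrow> nat \<Rightarrow> complex) \<Rightarrow> nat \<Rightarrow> nat \<Rightarrow> complex" where
  "rmul m M N j k = (\<Sum>l<2*m. M j l * N l k)"
definition rcomm :: "nat \<Rightarrow> (nat \<Rightarrow> nat \<Rightarrow> complex) \<Rightarrow> (nat \<Rightarrow> nat \<Rightarrow> complex) \<Rightarrow> nat \<Rightarrow> nat \<Rightarrow> complex" where
  "rcomm m M N j k = rmul m M N j k - rmul m N M j k"
fun rnest :: "nat \<Rightarrow> nat \<Rightarrow> (nat \<Rightarrow> nat \<Rightarrow> complex) \<Rightarrow> (nat \<Rightarrow> nat \<Rightarrow> complex) \<Rightarrow> nat \<Rightarrow> nat \<Rightarrow> complex" where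
  "rnest m 0 M N = N"
| "rnest m (Suc p) M N = rcomm m M (rnest m p M N)"

locale sec =
  fixes n m eta :: nat
  assumes m1: "1 \<le> m" and e1: "1 \<le> eta" and fit: "2*m + eta - 1 \<le> n"
begin

lemma lt_n: "j < 2*m \<Longrightarrow> j < n" using fit e1 by linarith

lemma Cs_ge: "c \<in> Cs m eta \<Longrightarrow> 2*m \<le> c" by (auto simp: Cs_def)

lemma notin_Cs: "j < 2*m \<Longrightarrow> j \<notin> Cs m eta" by (auto simp: Cs_def)

lemma st_low: "j < 2*m \<Longrightarrow> i \<in> st m eta j \<Longrightarrow> i < 2*m \<Longrightarrow> i = j"
  by (auto simp: st_def Cs_def)

lemma st_inj: "inj_on (st m eta) {..<2*m}"
  by (auto simp: inj_on_def st_def Cs_def)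

lemma st_sub: "j < 2*m \<Longrightarrow> st m eta j \<subseteq> {..<n}"
  using fit m1 lt_n by (auto simp: st_def Cs_def)

lemma st_card: "j < 2*m \<Longrightarrow> card (st m eta j) = eta"
  using e1 by (simp add: st_def notin_Cs) (simp add: Cs_def)

lemma st_eta: "j < 2*m \<Longrightarrow> st m eta j \<in> eta_states n eta"
  using st_sub st_card by (auto simp: eta_states_def)

lemma sect_eta: "sect m eta \<subseteq> eta_states n eta"
  using st_eta by (auto simp: sect_def)

lemma finite_eta: "finite (eta_states n eta)"
  by (rule finite_subset[of _ "Pow {..<n}"]) (auto simp: eta_states_def)

lemma st_minus: "j < 2*m \<Longrightarrow> st m eta j - {j} = Cs m eta"
  using notin_Cs by (auto simp: st_def)

lemma kin_term:
  assumes j0: "j0 < 2*m" and k0: "k0 < 2*m" and tz: "tau j k \<noteq> 0 \<Longrightarrow> j < 2*m \<and> k < 2*m"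
  shows "tau j k * opmul n (cre n j) (ann n k) (st m eta j0) (st m eta k0) = (if j = j0 \<and> k = k0 then tau j0 k0 else 0)"
proof (cases "j = j0 \<and> k = k0")
  case True
  have e1: "{i \<in> st m eta k0. i < k0} = {}" using k0 by (auto simp: st_def Cs_def)
  have e2: "{i \<in> st m eta k0 - {k0}. i < j0} = {}" using j0 by (auto simp: st_def Cs_def)
  have cond: "j0<n \<and> k0<n \<and> st m eta k0 \<subseteq> {..<n} \<and> k0 \<in> st m eta k0 \<and> j0 \<notin> st m eta k0 - {k0}
     \<and> st m eta j0 = insert j0 (st m eta k0 - {k0})"
    using st_sub[OF k0] st_minus[OF k0] notin_Cs[OF j0] lt_n j0 k0 by (simp add: st_def)
  have "opmul n (cre n j0) (ann n k0) (st m eta j0) (st m eta k0) = (-1)^(card ({}::nat set) + card ({}::nat set))"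
    by (simp only: crean if_P[OF cond] e1 e2)
  then show ?thesis using True by simp
next
  case False
  show ?thesis
  proof (cases "tau j k = 0")
    case False
    with tz have jk: "j < 2*m" "k < 2*m" by auto
    have "opmul n (cre n j) (ann n k) (st m eta j0) (st m eta k0) = 0"
    proof (rule ccontr)
      assume "opmul n (cre n j) (ann n k) (st m eta j0) (st m eta k0) \<noteq> 0"
      then have c: "k \<in> st m eta k0" "j \<notin> st m eta k0 - {k}" "st m eta j0 = insert j (st m eta k0 - {k})"
        by (auto simp: crean split: if_splits)
      have "k = k0" using st_low[OF k0 c(1) jk(2)] .
      then have "st m eta j0 = st m eta j" using c(3) st_minus[OF k0] by (simp add: st_def)
      then have "j = j0" using st_inj j0 jk by (auto simp: inj_on_def)
      with \<open>k = k0\<close> \<open>\<not> (j = j0 \<and> k = k0)\<close> show False by simp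
    qed
    then show ?thesis using \<open>\<not> (j = j0 \<and> k = k0)\<close> by (simp only: if_False mult_zero_right)
  qed (use \<open>\<not> (j = j0 \<and> k = k0)\<close> in auto)
qed

lemma kin_entry:
  assumes j0: "j0 < 2*m" and k0: "k0 < 2*m" and tz: "\<And>j k. tau j k \<noteq> 0 \<Longrightarrow> j < 2*m \<and> k < 2*m"
  shows "kinetic n tau (st m eta j0) (st m eta k0) = tau j0 k0"
proof -
  have "kinetic n tau (st m eta j0) (st m eta k0) = (\<Sum>j<n. \<Sum>k<n. if j = j0 \<and> k = k0 then tau j0 k0 else 0)"
    unfolding kinetic_def by (intro sum.cong refl) (rule kin_term[OF j0 k0 tz])
  also have "\<dots> = (\<Sum>j<n. if j = j0 then tau j0 k0 else 0)"
    using lt_n[OF k0] by (intro sum.cong refl) auto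
  also have "\<dots> = tau j0 k0" using lt_n[OF j0] by simp
  finally show ?thesis .
qed

lemma kin_term_blk:
  assumes tz: "tau j k \<noteq> 0 \<Longrightarrow> j < 2*m \<and> k < 2*m"
    and ne: "tau j k * opmul n (cre n j) (ann n k) S U \<noteq> 0"
  shows "(S \<in> sect m eta) = (U \<in> sect m eta)"
proof -
  from ne have jk: "j < 2*m" "k < 2*m" using tz by auto
  from ne have c: "k \<in> U" "j \<notin> U - {k}" "S = insert j (U - {k})"
    by (auto simp: crean split: if_splits)
  show ?thesis
  proof
    assume "S \<in> sect m eta"
    then obtain j0 where j0: "j0 < 2*m" "S = st m eta j0" by (auto simp: sect_def)
    have "j \<in> S" using c by simp
    then have "j = j0" using st_low[OF j0(1)] jk j0 by auto
    then have "U - {k} = Cs m eta" using c j0 st_minus[OF j0(1)] by auto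
    then have "U = st m eta k" using c(1) by (auto simp: st_def)
    then show "U \<in> sect m eta" using jk by (auto simp: sect_def)
  next
    assume "U \<in> sect m eta"
    then obtain k0 where k0: "k0 < 2*m" "U = st m eta k0" by (auto simp: sect_def)
    then have "k = k0" using st_low[OF k0(1)] jk c by auto
    then have "S = st m eta j" using c k0 st_minus[OF k0(1)] by (auto simp: st_def)
    then show "S \<in> sect m eta" using jk by (auto simp: sect_def)
  qed
qed

lemma kin_blk:
  assumes tz: "\<And>j k. tau j k \<noteq> 0 \<Longrightarrow> j < 2*m \<and> k < 2*m"
  shows "blk m eta (kinetic n tau)"
  unfolding blk_def kinetic_def
proof (intro allI impI)
  fix S U assume h: "(S \<in> sect m eta) \<noteq> (U \<in> sect m eta)"
  show "(\<Sum>j<n. \<Sum>k<n. tau j k * opmul n (cre n j) (ann n k) S U) = 0"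
    using kin_term_blk[OF tz] h by (intro sum.neutral ballI) blast
qed

lemma pot_blk: "blk m eta (potential n nu)"
  by (auto simp: blk_def potential_eq)

lemma pot_entry: "j < 2*m \<Longrightarrow> k < 2*m \<Longrightarrow> potential n nu (st m eta j) (st m eta k) =
   (if j = k then (\<Sum>l\<in>st m eta j. \<Sum>q\<in>st m eta j. nu l q) else 0)"
  using st_sub st_inj by (auto simp: potential_eq inj_on_def)


lemma opmul_red:
  assumes bx: "blk m eta X" and j: "j < 2*m" and k: "k < 2*m"
  shows "opmul n X Y (st m eta j) (st m eta k) = (\<Sum>l<2*m. X (st m eta j) (st m eta l) * Y (st m eta l) (st m eta k))"
proof -
  have sj: "st m eta j \<in> sect m eta" using j by (auto simp: sect_def)
  have sub: "sect m eta \<subseteq> Pow {..<n}" using st_sub by (auto simp: sect_def)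
  have "opmul n X Y (st m eta j) (st m eta k) = (\<Sum>R\<in>Pow {..<n}. X (st m eta j) R * Y R (st m eta k))"
    by (simp add: opmul_def)
  also have "\<dots> = (\<Sum>R\<in>sect m eta. X (st m eta j) R * Y R (st m eta k))"
    using bx sj sub by (intro sum.mono_neutral_right) (auto simp: blk_def)
  also have "\<dots> = (\<Sum>l<2*m. X (st m eta j) (st m eta l) * Y (st m eta l) (st m eta k))"
    unfolding sect_def by (subst sum.reindex[OF st_inj]) simp
  finally show ?thesis .
qed

lemma blk_opmul: "blk m eta X \<Longrightarrow> blk m eta Y \<Longrightarrow> blk m eta (opmul n X Y)"
  unfolding blk_def opmul_def
  by (intro allI impI sum.neutral ballI) (metis mult_eq_0_iff)

lemma blk_comm: "blk m eta X \<Longrightarrow> blk m eta Y \<Longrightarrow> blk m eta (comm n X Y)"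
  using blk_opmul[of X Y] blk_opmul[of Y X] unfolding blk_def comm_def by simp

lemma blk_nested: "blk m eta X \<Longrightarrow> blk m eta Y \<Longrightarrow> blk m eta (nested_comm n p X Y)"
  by (induction p) (auto intro: blk_comm)

lemma red_nested:
  assumes bx: "blk m eta X" and bY: "blk m eta Y"
    and MX: "\<And>j k. j < 2*m \<Longrightarrow> k < 2*m \<Longrightarrow> X (st m eta j) (st m eta k) = M j k"
    and NY: "\<And>j k. j < 2*m \<Longrightarrow> k < 2*m \<Longrightarrow> Y (st m eta j) (st m eta k) = N j k"
  shows "j < 2*m \<Longrightarrow> k < 2*m \<Longrightarrow> nested_comm n p X Y (st m eta j) (st m eta k) = rnest m p M N j k"
proof (induction p arbitrary: j k)
  case 0
  then show ?case using NY by simp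
next
  case (Suc p)
  have bz: "blk m eta (nested_comm n p X Y)" using blk_nested[OF bx bY] .
  have "nested_comm n (Suc p) X Y (st m eta j) (st m eta k) =
     opmul n X (nested_comm n p X Y) (st m eta j) (st m eta k) - opmul n (nested_comm n p X Y) X (st m eta j) (st m eta k)"
    by (simp add: comm_def)
  also have "\<dots> = rmul m M (rnest m p M N) j k - rmul m (rnest m p M N) M j k"
    unfolding rmul_def using Suc by (simp add: opmul_red[OF bx] opmul_red[OF bz] MX)
  finally show ?case by (simp add: rcomm_def)
qed

lemma sumE:
  assumes "\<And>S. S \<in> eta_states n eta \<Longrightarrow> S \<notin> sect m eta \<Longrightarrow> h S = 0"
  shows "(\<Sum>S\<in>eta_states n eta. h S) = (\<Sum>j<2*m. h (st m eta j))"
proof -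
  have "(\<Sum>S\<in>eta_states n eta. h S) = (\<Sum>S\<in>sect m eta. h S)"
    using assms sect_eta finite_eta by (intro sum.mono_neutral_right) auto
  also have "\<dots> = (\<Sum>j<2*m. h (st m eta j))"
    unfolding sect_def by (subst sum.reindex[OF st_inj]) simp
  finally show ?thesis .
qed

definition lift :: "(nat \<Rightarrow> complex) \<Rightarrow> nat set \<Rightarrow> complex" where
  "lift f S = (if S \<in> sect m eta then f (the_inv_into {..<2*m} (st m eta) S) else 0)"

lemma lift_st: "j < 2*m \<Longrightarrow> lift f (st m eta j) = f j"
  unfolding lift_def sect_def using st_inj by (simp add: the_inv_into_f_f)

lemma lift_out: "S \<notin> sect m eta \<Longrightarrow> lift f S = 0"
  unfolding lift_def by simp

lemma eta_lower:
  assumes f: "(\<Sum>j<2*m. (cmod (f j))\<^sup>2) = 1" and g: "(\<Sum>j<2*m. (cmod (g j))\<^sup>2) = 1"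
  shows "cmod (\<Sum>j<2*m. \<Sum>k<2*m. cnj (f j) * X (st m eta j) (st m eta k) * g k) \<le> eta_norm n eta X"
proof -
  let ?E = "eta_states n eta"
  let ?A = "{cmod (\<Sum>S\<in>?E. \<Sum>U\<in>?E. cnj (phi S) * X S U * psi U) | phi psi.
        (\<Sum>S\<in>?E. (cmod (phi S))\<^sup>2) = 1 \<and> (\<Sum>U\<in>?E. (cmod (psi U))\<^sup>2) = 1}"
  have nf: "(\<Sum>S\<in>?E. (cmod (lift f S))\<^sup>2) = 1"
    using f by (subst sumE) (auto simp: lift_out lift_st)
  have ng: "(\<Sum>S\<in>?E. (cmod (lift g S))\<^sup>2) = 1"
    using g by (subst sumE) (auto simp: lift_out lift_st)
  have val: "(\<Sum>S\<in>?E. \<Sum>U\<in>?E. cnj (lift f S) * X S U * lift g U)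
      = (\<Sum>j<2*m. \<Sum>k<2*m. cnj (f j) * X (st m eta j) (st m eta k) * g k)"
    by (subst sumE, simp add: lift_out, subst sumE, simp add: lift_out)
       (simp add: lift_st sumE lift_out)
  have mem: "cmod (\<Sum>j<2*m. \<Sum>k<2*m. cnj (f j) * X (st m eta j) (st m eta k) * g k) \<in> ?A"
    unfolding val[symmetric] using nf ng by (intro CollectI exI[of _ "lift f"] exI[of _ "lift g"]) simp
  have bdd: "bdd_above ?A"
  proof (rule bdd_aboveI)
    fix x assume "x \<in> ?A"
    then obtain phi psi where x: "x = cmod (\<Sum>S\<in>?E. \<Sum>U\<in>?E. cnj (phi S) * X S U * psi U)"
      and p1: "(\<Sum>S\<in>?E. (cmod (phi S))\<^sup>2) = 1" and p2: "(\<Sum>U\<in>?E. (cmod (psi U))\<^sup>2) = 1" by blast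
    have b1: "cmod (phi S) \<le> 1" if "S \<in> ?E" for S
    proof -
      have "(cmod (phi S))\<^sup>2 \<le> 1" using p1 member_le_sum[of S ?E "\<lambda>S. (cmod (phi S))\<^sup>2"] that finite_eta by simp
      then show ?thesis by (metis abs_norm_cancel abs_square_le_1)
    qed
    have b2: "cmod (psi S) \<le> 1" if "S \<in> ?E" for S
    proof -
      have "(cmod (psi S))\<^sup>2 \<le> 1" using p2 member_le_sum[of S ?E "\<lambda>S. (cmod (psi S))\<^sup>2"] that finite_eta by simp
      then show ?thesis by (metis abs_norm_cancel abs_square_le_1)
    qed
    have "x \<le> (\<Sum>S\<in>?E. cmod (\<Sum>U\<in>?E. cnj (phi S) * X S U * psi U))"
      unfolding x by (rule norm_sum)
    also have "\<dots> \<le> (\<Sum>S\<in>?E. \<Sum>U\<in>?E. cmod (cnj (phi S) * X S U * psi U))"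
      by (intro sum_mono norm_sum)
    also have "\<dots> \<le> (\<Sum>S\<in>?E. \<Sum>U\<in>?E. cmod (X S U))"
    proof (intro sum_mono)
      fix S U assume S: "S \<in> ?E" and U: "U \<in> ?E"
      have "cmod (cnj (phi S) * X S U * psi U) = cmod (phi S) * cmod (X S U) * cmod (psi U)"
        by (simp add: norm_mult)
      also have "\<dots> \<le> 1 * cmod (X S U) * 1"
        using b1[OF S] b2[OF U] by (intro mult_mono) auto
      finally show "cmod (cnj (phi S) * X S U * psi U) \<le> cmod (X S U)" by simp
    qed
    finally show "x \<le> (\<Sum>S\<in>?E. \<Sum>U\<in>?E. cmod (X S U))" .
  qed
  show ?thesis unfolding eta_norm_def using cSup_upper[OF mem bdd] .
qed

end



definition tauM :: "nat \<Rightarrow> real \<Rightarrow> nat \<Rightarrow> nat \<Rightarrow> complex" where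
  "tauM m u j k = (if j < 2*m \<and> k < 2*m \<and> (j < m) \<noteq> (k < m) then complex_of_real u else 0)"

definition ev :: "nat \<Rightarrow> complex \<Rightarrow> nat \<Rightarrow> complex" where
  "ev m a j = (if j < m then a else 0)"

definition RVm :: "nat \<Rightarrow> complex \<Rightarrow> nat \<Rightarrow> nat \<Rightarrow> complex" where
  "RVm m a j k = (if j = k then ev m a j else 0)"

definition zz :: "nat \<Rightarrow> bool \<Rightarrow> bool \<Rightarrow> complex" where
  "zz p jb kb = (if jb = kb then (if even p then (if jb then 1 else -1) else 0)
                 else (if even p then 0 else (if jb then -1 else 1)))"

lemma half_sum: "(\<Sum>l<2*m. F (l < m)) = of_nat m * F True + of_nat m * (F False :: 'a::comm_semiring_1)"
proof -
  have e: "{..<2*m} = {..<m} \<union> {m..<2*m}" by auto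
  have "(\<Sum>l<2*m. F (l < m)) = (\<Sum>l<m. F (l < m)) + (\<Sum>l\<in>{m..<2*m}. F (l < m))"
    unfolding e by (rule sum.union_disjoint) auto
  also have "(\<Sum>l<m. F (l < m)) = (\<Sum>l<m. F True)" by simp
  also have "(\<Sum>l\<in>{m..<2*m}. F (l < m)) = (\<Sum>l\<in>{m..<2*m}. F False)" by (intro sum.cong) auto
  finally show ?thesis by simp
qed

lemma sum_delta_lt: "k < (N::nat) \<Longrightarrow> (\<Sum>l<N. f l * (if l = k then c l else 0)) = f k * (c k::complex)"
  by (subst sum_single[where a=k]) auto

lemma sum_delta_lt2: "j < (N::nat) \<Longrightarrow> (\<Sum>l<N. (if j = l then c l else 0) * f l) = (c j::complex) * f j"
  by (subst sum_single[where a=j]) auto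

lemma rnestA:
  assumes j: "j < 2*m" and k: "k < 2*m"
  shows "rnest m (Suc q) (tauM m u) (RVm m a) j k = of_real u * a * (2 * of_nat m * of_real u)^q * zz (Suc q) (j < m) (k < m)"
  using j k
proof (induction q arbitrary: j k)
  case 0
  have "rnest m (Suc 0) (tauM m u) (RVm m a) j k = tauM m u j k * ev m a k - ev m a j * tauM m u j k"
    using 0 by (simp add: rcomm_def rmul_def RVm_def sum_delta_lt sum_delta_lt2)
  moreover have "tauM m u j k * ev m a k - ev m a j * tauM m u j k = of_real u * a * (2 * of_nat m * of_real u)^0 * zz (Suc 0) (j < m) (k < m)"
    using 0 by (auto simp: tauM_def ev_def zz_def)
  ultimately show ?case by simp
next
  case (Suc q)
  let ?c = "of_real u * a * (2 * of_nat m * of_real u)^q"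
  define F1 where "F1 = (\<lambda>b. (if (j < m) \<noteq> b then of_real u else 0) * (?c * zz (Suc q) b (k < m)))"
  define F2 where "F2 = (\<lambda>b. (?c * zz (Suc q) (j < m) b) * (if b \<noteq> (k < m) then of_real u else 0))"
  have "rnest m (Suc (Suc q)) (tauM m u) (RVm m a) j k =
     (\<Sum>l<2*m. tauM m u j l * (?c * zz (Suc q) (l < m) (k < m))) -
     (\<Sum>l<2*m. (?c * zz (Suc q) (j < m) (l < m)) * tauM m u l k)"
    using Suc by (simp add: rcomm_def rmul_def)
  also have "(\<Sum>l<2*m. tauM m u j l * (?c * zz (Suc q) (l < m) (k < m))) = (\<Sum>l<2*m. F1 (l < m))"
    using Suc unfolding F1_def by (intro sum.cong) (auto simp: tauM_def)
  also have "(\<Sum>l<2*m. (?c * zz (Suc q) (j < m) (l < m)) * tauM m u l k) = (\<Sum>l<2*m. F2 (l < m))"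
    using Suc unfolding F2_def by (intro sum.cong) (auto simp: tauM_def)
  also have "(\<Sum>l<2*m. F1 (l < m)) - (\<Sum>l<2*m. F2 (l < m)) = ?c * (2 * of_nat m * of_real u) * zz (Suc (Suc q)) (j < m) (k < m)"
    unfolding half_sum unfolding F1_def F2_def
    by (cases "j < m"; cases "k < m"; cases "even q") (auto simp: zz_def algebra_simps)
  finally show ?case by (simp add: algebra_simps)
qed

lemma rnestB:
  assumes j: "j < 2*m" and k: "k < 2*m"
  shows "rnest m p (RVm m a) (tauM m u) j k = (ev m a j - ev m a k)^p * tauM m u j k"
  using j k
proof (induction p arbitrary: j k)
  case 0 then show ?case by simp
next
  case (Suc p)
  have "rnest m (Suc p) (RVm m a) (tauM m u) j k =
     (\<Sum>l<2*m. RVm m a j l * ((ev m a l - ev m a k)^p * tauM m u l k)) -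
     (\<Sum>l<2*m. ((ev m a j - ev m a l)^p * tauM m u j l) * RVm m a l k)"
    using Suc by (simp add: rcomm_def rmul_def)
  also have "\<dots> = ev m a j * ((ev m a j - ev m a k)^p * tauM m u j k) - ((ev m a j - ev m a k)^p * tauM m u j k) * ev m a k"
    using Suc.prems unfolding RVm_def by (simp add: sum_delta_lt sum_delta_lt2)
  finally show ?case by (simp add: algebra_simps)
qed



definition nuM :: "nat \<Rightarrow> nat \<Rightarrow> real \<Rightarrow> nat \<Rightarrow> nat \<Rightarrow> complex" where
  "nuM m r w j k = (if (j < m \<and> (k = j \<or> (2*m \<le> k \<and> k < 2*m+r))) \<or> (k < m \<and> 2*m \<le> j \<and> j < 2*m+r)
     then complex_of_real w else 0)"

lemma cmod_isqrt: "x > 0 \<Longrightarrow> (cmod (complex_of_real (1 / sqrt x)))\<^sup>2 = 1 / x"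
  by (simp only: norm_of_real power2_abs) (simp add: power_divide)

context sec
begin

lemma cnt:
  assumes r: "r \<le> eta - 1"
  shows "(\<Sum>q\<in>Cs m eta. if q < 2*m+r then c else 0) = of_nat r * (c::complex)"
proof -
  have "(\<Sum>q\<in>Cs m eta. if q < 2*m+r then c else 0) = (\<Sum>q\<in>{x\<in>Cs m eta. x < 2*m+r}. c)"
    by (rule sum.inter_filter[symmetric]) (simp add: Cs_def)
  also have "{x\<in>Cs m eta. x < 2*m+r} = {2*m..<2*m+r}" using r e1 by (auto simp: Cs_def)
  finally show ?thesis by simp
qed

lemma energy:
  assumes r: "r \<le> eta - 1" and j: "j < 2*m"
  shows "(\<Sum>l\<in>st m eta j. \<Sum>q\<in>st m eta j. nuM m r w l q) = ev m (of_real (w * (2 * real r + 1))) j"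
proof -
  have fin: "finite (Cs m eta)" by (simp add: Cs_def)
  have nj: "j \<notin> Cs m eta" using notin_Cs[OF j] .
  have A: "(\<Sum>l\<in>st m eta j. \<Sum>q\<in>st m eta j. nuM m r w l q) =
    (nuM m r w j j + (\<Sum>q\<in>Cs m eta. nuM m r w j q)) + (\<Sum>l\<in>Cs m eta. nuM m r w l j + (\<Sum>q\<in>Cs m eta. nuM m r w l q))"
    unfolding st_def using fin nj by (simp add: sum.insert)
  have B: "(\<Sum>q\<in>Cs m eta. nuM m r w l q) = 0" if "l \<in> Cs m eta" for l
    using that by (intro sum.neutral) (auto simp: nuM_def Cs_def)
  show ?thesis
  proof (cases "j < m")
    case True
    have C1: "(\<Sum>q\<in>Cs m eta. nuM m r w j q) = (\<Sum>q\<in>Cs m eta. if q < 2*m+r then of_real w else 0)"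
      using True by (intro sum.cong) (auto simp: nuM_def Cs_def)
    have C2: "(\<Sum>l\<in>Cs m eta. nuM m r w l j + (\<Sum>q\<in>Cs m eta. nuM m r w l q)) = (\<Sum>q\<in>Cs m eta. if q < 2*m+r then of_real w else 0)"
      using True B by (intro sum.cong) (auto simp: nuM_def Cs_def)
    show ?thesis unfolding A C1 C2 cnt[OF r] using True by (simp add: nuM_def ev_def algebra_simps)
  next
    case False
    have C1: "(\<Sum>q\<in>Cs m eta. nuM m r w j q) = 0"
      using False by (intro sum.neutral) (auto simp: nuM_def Cs_def)
    have C2: "(\<Sum>l\<in>Cs m eta. nuM m r w l j + (\<Sum>q\<in>Cs m eta. nuM m r w l q)) = 0"
      using False B by (intro sum.neutral) (auto simp: nuM_def Cs_def)
    show ?thesis unfolding A C1 C2 using False by (simp add: nuM_def ev_def)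
  qed
qed

lemma tz: "tauM m u j k \<noteq> 0 \<Longrightarrow> j < 2*m \<and> k < 2*m"
  by (auto simp: tauM_def split: if_splits)

lemma redT: "j < 2*m \<Longrightarrow> k < 2*m \<Longrightarrow> kinetic n (tauM m u) (st m eta j) (st m eta k) = tauM m u j k"
  by (rule kin_entry) (auto dest: tz)

lemma redV: "r \<le> eta - 1 \<Longrightarrow> j < 2*m \<Longrightarrow> k < 2*m \<Longrightarrow>
   potential n (nuM m r w) (st m eta j) (st m eta k) = RVm m (of_real (w * (2 * real r + 1))) j k"
  by (simp add: pot_entry energy RVm_def)

lemma bound_TV:
  fixes u w :: real
  assumes r: "r \<le> eta - 1" and u: "u > 0" and w: "w > 0"
  shows "real m * u * (w * (2 * real r + 1)) * (2 * real m * u)^q / sqrt 2 \<le>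
     eta_norm n eta (nested_comm n (Suc q) (kinetic n (tauM m u)) (potential n (nuM m r w)))"
proof -
  let ?X = "nested_comm n (Suc q) (kinetic n (tauM m u)) (potential n (nuM m r w))"
  let ?a = "w * (2 * real r + 1)"
  let ?C = "complex_of_real (u * ?a * (2 * real m * u)^q)"
  have ent: "?X (st m eta j) (st m eta k) = ?C * zz (Suc q) (j < m) (k < m)" if "j < 2*m" "k < 2*m" for j k
  proof -
    have "?X (st m eta j) (st m eta k) = rnest m (Suc q) (tauM m u) (RVm m (of_real ?a)) j k"
      by (rule red_nested[OF kin_blk pot_blk]) (auto dest: tz simp: redT redV[OF r] that)
    also have "\<dots> = ?C * zz (Suc q) (j < m) (k < m)"
      using rnestA[OF that] by simp
    finally show ?thesis .
  qed
  define f where "f j = (if j < m then complex_of_real (1 / sqrt m) else 0)" for j :: nat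
  define g where "g k = complex_of_real (1 / sqrt (2*m))" for k :: nat
  have m0: "real m > 0" using m1 by simp
  have nf: "(\<Sum>j<2*m. (cmod (f j))\<^sup>2) = 1"
  proof -
    have "(\<Sum>j<2*m. (cmod (f j))\<^sup>2) = (\<Sum>j<2*m. (\<lambda>b. if b then 1 / real m else 0) (j < m))"
      unfolding f_def using cmod_isqrt m0 by (intro sum.cong) auto
    also have "\<dots> = 1" using m0 by (subst half_sum[where F="\<lambda>b. if b then 1 / real m else 0"]) simp
    finally show ?thesis .
  qed
  have ng: "(\<Sum>j<2*m. (cmod (g j))\<^sup>2) = 1"
    unfolding g_def using cmod_isqrt[of "2 * real m"] m0 by simp
  have val: "(\<Sum>j<2*m. \<Sum>k<2*m. cnj (f j) * ?X (st m eta j) (st m eta k) * g k)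
      = of_real (real m * real m / (sqrt m * sqrt (2*m))) * ?C * (if even (Suc q) then 1 else -1)"
  proof -
    define H where "H b b' = (if b then complex_of_real (1 / sqrt m) else 0) * (?C * zz (Suc q) b b') * complex_of_real (1 / sqrt (2*m))" for b b'
    define F where "F b = (\<Sum>k<2*m. H b (k < m))" for b
    have "(\<Sum>j<2*m. \<Sum>k<2*m. cnj (f j) * ?X (st m eta j) (st m eta k) * g k) = (\<Sum>j<2*m. F (j < m))"
      unfolding f_def g_def F_def H_def by (intro sum.cong refl) (simp add: ent del: nested_comm.simps)
    also have "\<dots> = of_nat m * (of_nat m * H True True + of_nat m * H True False) + of_nat m * (of_nat m * H False True + of_nat m * H False False)"
      unfolding F_def half_sum by (rule half_sum[where F="\<lambda>b. of_nat m * H b True + of_nat m * H b False"])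
    also have "\<dots> = of_real (real m * real m / (sqrt m * sqrt (2*m))) * ?C * (if even (Suc q) then 1 else -1)"
      unfolding H_def by (cases "even q") (simp_all add: zz_def)
    finally show ?thesis .
  qed
  have sq: "real m * real m / (sqrt m * sqrt (2*m)) = real m / sqrt 2"
  proof -
    have "sqrt m * sqrt (2*m) = real m * sqrt 2"
      using m0 by (simp add: real_sqrt_mult[symmetric]) (simp add: real_sqrt_mult)
    then show ?thesis using m0 by simp
  qed
  have "cmod (\<Sum>j<2*m. \<Sum>k<2*m. cnj (f j) * ?X (st m eta j) (st m eta k) * g k) =
     real m / sqrt 2 * (u * ?a * (2 * real m * u)^q)"
    unfolding val sq using u w by (simp only: norm_mult norm_of_real) (simp add: abs_mult)
  then have "real m / sqrt 2 * (u * ?a * (2 * real m * u)^q) \<le> eta_norm n eta ?X"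
    using eta_lower[OF nf ng, of ?X] by simp
  moreover have "real m / sqrt 2 * (u * ?a * (2 * real m * u)^q) = real m * u * ?a * (2 * real m * u)^q / sqrt 2"
    by simp
  ultimately show ?thesis by (simp only:)
qed

lemma bound_VT:
  fixes u w :: real
  assumes r: "r \<le> eta - 1" and u: "u > 0" and w: "w > 0"
  shows "(w * (2 * real r + 1))^p * u \<le>
     eta_norm n eta (nested_comm n p (potential n (nuM m r w)) (kinetic n (tauM m u)))"
proof -
  let ?X = "nested_comm n p (potential n (nuM m r w)) (kinetic n (tauM m u))"
  let ?a = "w * (2 * real r + 1)"
  have ent: "?X (st m eta j) (st m eta k) = (ev m (of_real ?a) j - ev m (of_real ?a) k)^p * tauM m u j k"
    if "j < 2*m" "k < 2*m" for j k
  proof -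
    have "?X (st m eta j) (st m eta k) = rnest m p (RVm m (of_real ?a)) (tauM m u) j k"
      by (rule red_nested[OF pot_blk kin_blk]) (auto dest: tz simp: redT redV[OF r] that)
    then show ?thesis using rnestB[OF that] by simp
  qed
  define f where "f j = (if j = 0 then (1::complex) else 0)" for j :: nat
  define g where "g k = (if k = m then (1::complex) else 0)" for k :: nat
  have m0: "0 < 2*m" "m < 2*m" using m1 by auto
  have nf: "(\<Sum>j<2*m. (cmod (f j))\<^sup>2) = 1" unfolding f_def using m0 by (subst sum_single[where a=0]) auto
  have ng: "(\<Sum>j<2*m. (cmod (g j))\<^sup>2) = 1" unfolding g_def using m0 by (subst sum_single[where a=m]) auto
  have "(\<Sum>j<2*m. \<Sum>k<2*m. cnj (f j) * ?X (st m eta j) (st m eta k) * g k) = ?X (st m eta 0) (st m eta m)"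
    unfolding f_def g_def using m0 by (simp add: sum_single[where a=0] sum_single[where a=m])
  also have "\<dots> = of_real (?a^p * u)"
    using m0 m1 by (simp add: ent ev_def tauM_def)
  finally have "cmod (of_real (?a^p * u)) \<le> eta_norm n eta ?X"
    using eta_lower[OF nf ng, of ?X] by simp
  moreover have h: "0 \<le> ?a^p * u" using u w by simp
  ultimately show ?thesis by (simp only: norm_of_real abs_of_nonneg[OF h])
qed

end



lemma herm_tau: "hermitian_mat n (tauM m u)"
  by (auto simp: hermitian_mat_def tauM_def)

lemma nu_sym: "nuM m r w k j = nuM m r w j k"
  unfolding nuM_def by (rule if_cong) auto

lemma herm_nu: "hermitian_mat n (nuM m r w)"
  unfolding hermitian_mat_def by (subst nu_sym) (auto simp: nuM_def)

lemma max_tau: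
  assumes "1 \<le> m" "2*m \<le> n" "u > 0"
  shows "max_norm n (tauM m u) = u"
  unfolding max_norm_def
proof (rule Max_eqI)
  show "finite ((\<lambda>(j, k). cmod (tauM m u j k)) ` ({..<n} \<times> {..<n}))" by simp
  show "\<And>y. y \<in> (\<lambda>(j, k). cmod (tauM m u j k)) ` ({..<n} \<times> {..<n}) \<Longrightarrow> y \<le> u"
    using assms by (auto simp: tauM_def)
  have "(0, m) \<in> {..<n} \<times> {..<n}" using assms by auto
  moreover have "cmod (tauM m u 0 m) = u" using assms by (simp add: tauM_def)
  ultimately show "u \<in> (\<lambda>(j, k). cmod (tauM m u j k)) ` ({..<n} \<times> {..<n})"
    by (metis (no_types, lifting) case_prod_conv image_eqI)
qed

lemma max_nu:
  assumes "1 \<le> m" "0 < n" "w > 0"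
  shows "max_norm n (nuM m r w) = w"
  unfolding max_norm_def
proof (rule Max_eqI)
  show "finite ((\<lambda>(j, k). cmod (nuM m r w j k)) ` ({..<n} \<times> {..<n}))" by simp
  show "\<And>y. y \<in> (\<lambda>(j, k). cmod (nuM m r w j k)) ` ({..<n} \<times> {..<n}) \<Longrightarrow> y \<le> w"
    using assms by (auto simp: nuM_def)
  have "(0, 0) \<in> {..<n} \<times> {..<n}" using assms by auto
  moreover have "cmod (nuM m r w 0 0) = w" using assms by (simp add: nuM_def)
  ultimately show "w \<in> (\<lambda>(j, k). cmod (nuM m r w j k)) ` ({..<n} \<times> {..<n})"
    by (metis (no_types, lifting) case_prod_conv image_eqI)
qed

lemma tau_row: "card {k. k < n \<and> tauM m u j k \<noteq> 0} \<le> m"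
proof -
  have "{k. k < n \<and> tauM m u j k \<noteq> 0} \<subseteq> (if j < m then {m..<2*m} else {..<m})"
    by (auto simp: tauM_def split: if_splits)
  then have "card {k. k < n \<and> tauM m u j k \<noteq> 0} \<le> card (if j < m then {m..<2*m} else {..<m})"
    by (intro card_mono) auto
  then show ?thesis by (simp split: if_splits)
qed

lemma tau_sym: "tauM m u k j = tauM m u j k"
  unfolding tauM_def by (rule if_cong) auto

lemma sparse_tau: "m \<le> d \<Longrightarrow> sparse_mat n d (tauM m u)"
  unfolding sparse_mat_def using tau_row[of n m u] by (subst (2) tau_sym) (auto intro: le_trans)

lemma nu_row: "card {k. k < n \<and> nuM m r w j k \<noteq> 0} \<le> max m (r+1)"
proof -
  have "{k. k < n \<and> nuM m r w j k \<noteq> 0} \<subseteq> (if j < m then insert j {2*m..<2*m+r} else {..<m})"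
    by (auto simp: nuM_def split: if_splits)
  then have "card {k. k < n \<and> nuM m r w j k \<noteq> 0} \<le> card (if j < m then insert j {2*m..<2*m+r} else {..<m})"
    by (intro card_mono) auto
  also have "\<dots> \<le> max m (r+1)" by (auto intro: le_trans[OF card_insert_le_m1])
  finally show ?thesis .
qed

lemma sparse_nu:
  assumes "m \<le> d" "r + 1 \<le> d" shows "sparse_mat n d (nuM m r w)"
proof -
  have "card {k. k < n \<and> nuM m r w j k \<noteq> 0} \<le> d" for j
    using nu_row[of n m r w j] assms by simp
  then show ?thesis unfolding sparse_mat_def by (subst (2) nu_sym) auto
qed

lemma tau1_inner: "(\<Sum>k<n. tauM 1 s j k * y k) = (if j = 0 \<and> 1 < n then of_real s * y 1 else if j = 1 \<and> 0 < n then of_real s * y 0 else 0)"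
proof -
  consider "j = 0" | "j = 1" | "j \<noteq> 0 \<and> j \<noteq> 1" by blast
  then show ?thesis
  proof cases
    case 1 then show ?thesis by (subst sum_single[where a=1]) (auto simp: tauM_def)
  next
    case 2 then show ?thesis by (subst sum_single[where a=0]) (auto simp: tauM_def)
  next
    case 3 then show ?thesis by (auto simp: tauM_def intro!: sum.neutral)
  qed
qed

lemma spec_tau1:
  assumes n: "2 \<le> n" and s: "s > 0"
  shows "spec_norm n (tauM 1 s) = s"
proof -
  have key: "(\<Sum>j<n. (cmod (\<Sum>k<n. tauM 1 s j k * y k))\<^sup>2) = s\<^sup>2 * ((cmod (y 0))\<^sup>2 + (cmod (y 1))\<^sup>2)" for y
  proof -
    let ?h = "\<lambda>j::nat. (cmod (if j = 0 \<and> 1 < n then of_real s * y 1 else if j = 1 \<and> 0 < n then of_real s * y 0 else 0))\<^sup>2"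
    have "(\<Sum>j<n. (cmod (\<Sum>k<n. tauM 1 s j k * y k))\<^sup>2) = (\<Sum>j<n. ?h j)"
      unfolding tau1_inner ..
    also have "\<dots> = (\<Sum>j\<in>{0,1}. ?h j)"
      by (rule sum.mono_neutral_right) (use n in auto)
    also have "\<dots> = s\<^sup>2 * ((cmod (y 0))\<^sup>2 + (cmod (y 1))\<^sup>2)"
      using n s by (simp add: norm_mult power_mult_distrib algebra_simps)
    finally show ?thesis .
  qed
  show ?thesis unfolding spec_norm_def
  proof (rule cSup_eq_maximum)
    let ?y = "\<lambda>k. if k = 0 then (1::complex) else 0"
    have "(\<Sum>k<n. (cmod (?y k))\<^sup>2) = 1" using n by (subst sum_single[where a=0]) auto
    moreover have "sqrt (\<Sum>j<n. (cmod (\<Sum>k<n. tauM 1 s j k * ?y k))\<^sup>2) = s"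
      unfolding key using s by simp
    ultimately show "s \<in> {sqrt (\<Sum>j<n. (cmod (\<Sum>k<n. tauM 1 s j k * y k))\<^sup>2) | y. (\<Sum>k<n. (cmod (y k))\<^sup>2) = 1}"
      by (intro CollectI exI[of _ ?y]) simp
  next
    fix x assume "x \<in> {sqrt (\<Sum>j<n. (cmod (\<Sum>k<n. tauM 1 s j k * y k))\<^sup>2) | y. (\<Sum>k<n. (cmod (y k))\<^sup>2) = 1}"
    then obtain y where x: "x = sqrt (s\<^sup>2 * ((cmod (y 0))\<^sup>2 + (cmod (y 1))\<^sup>2))" and y: "(\<Sum>k<n. (cmod (y k))\<^sup>2) = 1"
      unfolding key by blast
    have "(\<Sum>k\<in>{0,1}. (cmod (y k))\<^sup>2) \<le> (\<Sum>k<n. (cmod (y k))\<^sup>2)"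
      using n by (intro sum_mono2) auto
    then have "(cmod (y 0))\<^sup>2 + (cmod (y 1))\<^sup>2 \<le> 1" using y by simp
    then have "s\<^sup>2 * ((cmod (y 0))\<^sup>2 + (cmod (y 1))\<^sup>2) \<le> s\<^sup>2 * 1" by (intro mult_left_mono) auto
    then have "x \<le> sqrt (s\<^sup>2)" unfolding x by (intro real_sqrt_le_mono) simp
    then show "x \<le> s" using s by simp
  qed
qed



lemma sqrt2_le2: "sqrt 2 \<le> (2::real)"
proof -
  have "sqrt 2 \<le> sqrt (4::real)" by (rule real_sqrt_le_mono) simp
  then show ?thesis by simp
qed

lemma half_le: "0 \<le> (Z::real) \<Longrightarrow> Z / 2 \<le> Z / sqrt 2"
  using sqrt2_le2 by (intro divide_left_mono) auto

lemma div_le_self_real: assumes "0 \<le> (x::real)" "1 \<le> y" shows "x / y \<le> x"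
proof -
  have "x * 1 \<le> x * y" using assms by (intro mult_left_mono) auto
  then show ?thesis using assms by (simp add: divide_le_eq)
qed

theorem theorem2:
  fixes p :: nat
  assumes "p \<ge> 1"
  shows "\<exists>c>0.
    (\<forall>(n::nat) (eta::nat) (s::real) (w::real).
       s > 0 \<longrightarrow> w > 0 \<longrightarrow> eta \<ge> 1 \<longrightarrow> 2 * eta \<le> n \<longrightarrow>
       (\<exists>tau nu. hermitian_mat n tau \<and> hermitian_mat n nu \<and>
          spec_norm n tau = s \<and> max_norm n nu = w \<and>
          eta_norm n eta (nested_comm n p (kinetic n tau) (potential n nu))
            \<ge> c * s ^ p * w * real eta \<and>
          eta_norm n eta (nested_comm n p (potential n nu) (kinetic n tau))
            \<ge> c * (w * real eta) ^ p * s / real n))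
  \<and> (\<forall>(n::nat) (eta::nat) (d::nat) (u::real) (w::real).
       u > 0 \<longrightarrow> w > 0 \<longrightarrow> d \<ge> 1 \<longrightarrow> d \<le> eta \<longrightarrow> 2 * eta \<le> n \<longrightarrow>
       (\<exists>tau nu. hermitian_mat n tau \<and> hermitian_mat n nu \<and>
          sparse_mat n d tau \<and> sparse_mat n d nu \<and>
          max_norm n tau = u \<and> max_norm n nu = w \<and>
          eta_norm n eta (nested_comm n p (kinetic n tau) (potential n nu))
            \<ge> c * (u * real d) ^ p * w * real d \<and>
          eta_norm n eta (nested_comm n p (potential n nu) (kinetic n tau))
            \<ge> c * (w * real d) ^ p * u))"
proof -
  obtain q where p: "p = Suc q" using assms by (cases p) auto
  have part1: "\<exists>tau nu. hermitian_mat n tau \<and> hermitian_mat n nu \<and>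
          spec_norm n tau = s \<and> max_norm n nu = w \<and>
          eta_norm n eta (nested_comm n p (kinetic n tau) (potential n nu))
            \<ge> 1/4 * s ^ p * w * real eta \<and>
          eta_norm n eta (nested_comm n p (potential n nu) (kinetic n tau))
            \<ge> 1/4 * (w * real eta) ^ p * s / real n"
    if s: "s > 0" and w: "w > 0" and e: "eta \<ge> 1" and en: "2 * eta \<le> n" for n eta :: nat and s w :: real
  proof -
    interpret S: sec n 1 eta using e en by unfold_locales auto
    have r: "eta - 1 \<le> eta - 1" by simp
    let ?A = "2 * real (eta - 1) + 1"
    have A: "real eta \<le> ?A" using e by (simp add: of_nat_diff)
    have b1: "s * (w * ?A) * (2 * s)^q / sqrt 2 \<le> eta_norm n eta (nested_comm n p (kinetic n (tauM 1 s)) (potential n (nuM 1 (eta - 1) w)))"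
      using S.bound_TV[OF r s w, of q] unfolding p by simp
    note b2 = S.bound_VT[OF r s w, of p]
    have g1: "1/4 * s ^ p * w * real eta \<le> s * (w * ?A) * (2 * s)^q / sqrt 2"
    proof -
      have "s^q \<le> (2 * s)^q" using s by (intro power_mono) auto
      then have "(s * s^q) * (w * real eta) \<le> (s * (2 * s)^q) * (w * ?A)"
        using s w A by (intro mult_mono mult_left_mono) auto
      then have "1/4 * ((s * s^q) * (w * real eta)) \<le> 1/4 * ((s * (2 * s)^q) * (w * ?A))" by simp
      also have "\<dots> \<le> ((s * (2 * s)^q) * (w * ?A)) / 2" using s w by simp
      also have "\<dots> \<le> ((s * (2 * s)^q) * (w * ?A)) / sqrt 2" using s w by (intro half_le) simp
      finally show ?thesis unfolding p by (simp add: algebra_simps)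
    qed
    have g2: "1/4 * (w * real eta) ^ p * s / real n \<le> (w * ?A) ^ p * s"
    proof -
      have "(w * real eta) ^ p \<le> (w * ?A) ^ p" using w A by (intro power_mono mult_left_mono) auto
      moreover have "1/4 * (w * real eta) ^ p * s / real n \<le> (w * real eta) ^ p * s"
      proof -
        have n1: "real n \<ge> 1" using e en by simp
        have X: "0 \<le> (w * real eta) ^ p * s" using w s by simp
        have "1/4 * (w * real eta) ^ p * s / real n = (1/4 * ((w * real eta) ^ p * s)) / real n" by simp
        also have "\<dots> \<le> 1/4 * ((w * real eta) ^ p * s)"
          using n1 X by (intro div_le_self_real) auto
        also have "\<dots> \<le> (w * real eta) ^ p * s" using X by (simp only: mult_le_cancel_right1)
        finally show ?thesis .
      qed
      ultimately show ?thesis using s by (meson dual_order.trans less_imp_le mult_right_mono)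
    qed
    show ?thesis
      apply (rule exI[of _ "tauM 1 s"], rule exI[of _ "nuM 1 (eta - 1) w"])
      using herm_tau herm_nu spec_tau1[of n s] max_nu[of 1 n w "eta - 1"] s w e en
        order_trans[OF g1 b1] order_trans[OF g2 b2]
      by auto
  qed
  have part2: "\<exists>tau nu. hermitian_mat n tau \<and> hermitian_mat n nu \<and>
          sparse_mat n d tau \<and> sparse_mat n d nu \<and>
          max_norm n tau = u \<and> max_norm n nu = w \<and>
          eta_norm n eta (nested_comm n p (kinetic n tau) (potential n nu))
            \<ge> 1/4 * (u * real d) ^ p * w * real d \<and>
          eta_norm n eta (nested_comm n p (potential n nu) (kinetic n tau))
            \<ge> 1/4 * (w * real d) ^ p * u"
    if u: "u > 0" and w: "w > 0" and d1: "d \<ge> 1" and de: "d \<le> eta" and en: "2 * eta \<le> n"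
    for n eta d :: nat and u w :: real
  proof -
    define m where "m = (d + 1) div 2"
    define r where "r = d - 1"
    have m1: "1 \<le> m" "m \<le> d" "2*m \<le> d + 1" "d \<le> 2*m" using d1 unfolding m_def by auto
    have dm: "real d \<le> 2 * real m" using m1 by linarith
    have r1: "r \<le> eta - 1" "r + 1 \<le> d" using d1 de unfolding r_def by auto
    interpret S: sec n m eta using m1 de en d1 by unfold_locales auto
    let ?A = "2 * real r + 1"
    have A: "real d \<le> ?A" using d1 unfolding r_def by (simp add: of_nat_diff)
    note b1 = S.bound_TV[OF r1(1) u w, of q]
    note b2 = S.bound_VT[OF r1(1) u w, of p]
    have g1: "1/4 * (u * real d) ^ p * w * real d \<le> real m * u * (w * ?A) * (2 * real m * u)^q / sqrt 2"
    proof -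
      let ?Z = "real m * u * (w * ?A) * (2 * real m * u)^q"
      have "(u * real d)^q \<le> (2 * real m * u)^q" using u dm by (intro power_mono) (auto simp: algebra_simps)
      then have "(real d * u * (w * real d)) * (u * real d)^q \<le> (2 * real m * u * (w * ?A)) * (2 * real m * u)^q"
        using u w A dm by (intro mult_mono mult_left_mono) auto
      then have Y: "(u * real d) ^ p * w * real d \<le> 2 * ?Z" unfolding p by (simp add: algebra_simps)
      have "1/4 * (u * real d) ^ p * w * real d = 1/4 * ((u * real d) ^ p * w * real d)" by simp
      also have "\<dots> \<le> ?Z / 2" using Y by linarith
      also have "\<dots> \<le> ?Z / sqrt 2" using u w by (intro half_le) simp
      finally show ?thesis .
    qed
    have g2: "1/4 * (w * real d) ^ p * u \<le> (w * ?A) ^ p * u"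
    proof -
      have "(w * real d) ^ p \<le> (w * ?A) ^ p" using w A by (intro power_mono mult_left_mono) auto
      then have "(w * real d) ^ p * u \<le> (w * ?A) ^ p * u" using u by simp
      moreover have "0 \<le> (w * real d) ^ p * u" using u w by simp
      ultimately show ?thesis by simp
    qed
    show ?thesis
      apply (rule exI[of _ "tauM m u"], rule exI[of _ "nuM m r w"])
      using herm_tau herm_nu sparse_tau[OF m1(2)] sparse_nu[OF m1(2) r1(2)]
        max_tau[of m n u] max_nu[of m n w r] m1 u w en de
        order_trans[OF g1 b1[folded p]] order_trans[OF g2 b2]
      by auto
  qed
  show ?thesis
    by (rule exI[of _ "1/4"]) (use part1 part2 in auto)
qed


end
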